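(* Let $Y\subset\mathbb C^n$ be a $k$-dimensional subspace and $a\in(\mathbb C^\times)^n$, and assume that for every $j$, $Y\not\subset\{q_j=0\}$ and $Y^\perp\not\subset\{p_j=0\}$. Let $I\subset\{1,\dots,n\}$ be a $k$-element subset with complement $\bar I$ such that the functions $q_I=\{q_i:i\in I\}$ form a coordinate system on $Y$. Then the functions $q_I$ and $p_{\bar I}=\{p_j:j\in\bar I\}$ form a coordinate system on $L_{Y,a}$.
   Context: $\mathbb C^n$ has coordinates $q_1,\dots,q_n$, the dual space $(\mathbb C^n)^*$ has dual coordinates $p_1,\dots,p_n$. $Y^\perp\subset(\mathbb C^n)^*$ is the annihilator of $Y$. The map $r_a(q,p)=(q_1+a_1/p_1,\dots,q_n+a_n/p_n,p_1,\dots,p_n)$ is defined where all $p_j\ne0$, and $L_{Y,a}=r_a(Y\times Y^\perp)\subset\mathbb C^n\times(\mathbb C^n)^*$ (image of the points of $Y\times Y^\perp$ with all $p_j\ne0$); it is the smooth variety in $\mathbb C^n\times\{\prod_jp_j\ne0\}$ given by $\sum_j\alpha_jp_j=0$ ($\alpha\in Y$) and $\sum_j\beta_j(q_j-a_j/p_j)=0$ ($\beta\in Y^\perp$). *)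

theory Defs
  imports "HOL-Analysis.Analysis"
begin

text \<open>C^n is modelled as complex^'n (index type 'n finite); the dual space
  (C^n)^* is identified with complex^'n via the pairing below.\<close>

definition pairing :: "complex^'n \<Rightarrow> complex^'n \<Rightarrow> complex" where
  "pairing p y = (\<Sum>j\<in>UNIV. p$j * y$j)"

definition annihilator :: "(complex^'n) set \<Rightarrow> (complex^'n) set" where
  "annihilator Y = {p. \<forall>y\<in>Y. pairing p y = 0}"

definition r_map :: "complex^'n \<Rightarrow> (complex^'n) \<times> (complex^'n) \<Rightarrow> (complex^'n) \<times> (complex^'n)" where
  "r_map a qp = ((\<chi> j. fst qp $ j + a$j / snd qp $ j), snd qp)"

definition L_set :: "(complex^'n) set \<Rightarrow> complex^'n \<Rightarrow> ((complex^'n) \<times> (complex^'n)) set" where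
  "L_set Y a = r_map a ` {(q,p). q \<in> Y \<and> p \<in> annihilator Y \<and> (\<forall>j. p$j \<noteq> 0)}"

definition coords_on_subspace :: "'n set \<Rightarrow> (complex^'n) set \<Rightarrow> bool" where
  "coords_on_subspace I Y \<longleftrightarrow>
     (\<forall>y\<in>Y. (\<forall>i\<in>I. y$i = 0) \<longrightarrow> y = 0) \<and>
     (\<forall>c::complex^'n. \<exists>y\<in>Y. \<forall>i\<in>I. y$i = c$i)"

definition coord_map :: "'n set \<Rightarrow> (complex^'n) \<times> (complex^'n) \<Rightarrow> complex^'n" where
  "coord_map I qp = (\<chi> j. if j \<in> I then fst qp $ j else snd qp $ j)"

text \<open>A map into C^n x C^n (viewed as a complex vector space) is holomorphic at x:
  Frechet differentiable with complex-linear derivative.\<close>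
definition cholo_at :: "(complex^'n \<Rightarrow> (complex^'n) \<times> (complex^'n)) \<Rightarrow> complex^'n \<Rightarrow> bool" where
  "cholo_at f x \<longleftrightarrow> (\<exists>D. (f has_derivative D) (at x) \<and>
      (\<forall>c v. D (c *s v) = (c *s fst (D v), c *s snd (D v))))"

definition coordinate_system_on :: "((complex^'n) \<times> (complex^'n) \<Rightarrow> complex^'n) \<Rightarrow> ((complex^'n) \<times> (complex^'n)) set \<Rightarrow> bool" where
  "coordinate_system_on F L \<longleftrightarrow> (\<exists>U \<psi>. open U \<and> bij_betw F L U \<and>
      (\<forall>z\<in>L. \<psi> (F z) = z) \<and> (\<forall>x\<in>U. cholo_at \<psi> x))"

end

theory Submission imports Defs begin

lemma has_derivative_vec_lambda:
  fixes F :: "'n::finite \<Rightarrow> 'a::real_normed_vector \<Rightarrow> complex"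
  assumes "\<And>j. (F j has_derivative D j) (at x)"
  shows "((\<lambda>x. \<chi> j. F j x) has_derivative (\<lambda>v. \<chi> j. D j v)) (at x)"
  apply (subst has_derivative_componentwise_within)
  apply (auto simp: Basis_vec_def inner_axis)
  apply (rule bounded_linear.has_derivative[OF bounded_linear_inner_left])
  apply (rule assms)
  done

definition cd :: "(complex^'n \<Rightarrow> complex) \<Rightarrow> complex^'n \<Rightarrow> bool" where
  "cd f x \<longleftrightarrow> (\<exists>D. (f has_derivative D) (at x) \<and> (\<forall>c v. D (c *s v) = c * D v))"

lemma cd_const: "cd (\<lambda>x. c) x"
  unfolding cd_def by (rule exI[of _ "\<lambda>v. 0"]) auto

lemma cd_nth: "cd (\<lambda>x. x $ l) x"
  unfolding cd_def
  by (rule exI[of _ "\<lambda>v. v $ l"]) (auto intro: bounded_linear.has_derivative[OF bounded_linear_vec_nth])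

lemma cd_add: "cd f x \<Longrightarrow> cd g x \<Longrightarrow> cd (\<lambda>x. f x + g x) x"
  unfolding cd_def apply clarify
  subgoal for D E by (rule exI[of _ "\<lambda>v. D v + E v"]) (auto intro: has_derivative_add simp: algebra_simps)
  done

lemma cd_minus: "cd f x \<Longrightarrow> cd (\<lambda>x. - f x) x"
  unfolding cd_def apply clarify
  subgoal for D by (rule exI[of _ "\<lambda>v. - D v"]) (auto intro: has_derivative_minus)
  done

lemma cd_diff: "cd f x \<Longrightarrow> cd g x \<Longrightarrow> cd (\<lambda>x. f x - g x) x"
  using cd_add[of f x "\<lambda>x. - g x"] cd_minus[of g x] by simp

lemma cd_mult: "cd f x \<Longrightarrow> cd g x \<Longrightarrow> cd (\<lambda>x. f x * g x) x"
  unfolding cd_def apply clarify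
  subgoal for D E apply (rule exI[of _ "\<lambda>h. f x * E h + D h * g x"])
    apply (rule conjI, erule (1) has_derivative_mult) by (auto simp: algebra_simps)
  done

lemma cd_divide: "cd f x \<Longrightarrow> cd g x \<Longrightarrow> g x \<noteq> 0 \<Longrightarrow> cd (\<lambda>x. f x / g x) x"
  unfolding cd_def apply clarify
  subgoal for D E apply (rule exI[of _ "\<lambda>h. (D h * g x - f x * E h) / (g x * g x)"])
    apply (rule conjI, erule (2) has_derivative_divide') by (auto simp: algebra_simps diff_divide_distrib)
  done

lemma cd_sum: "finite A \<Longrightarrow> (\<And>i. i \<in> A \<Longrightarrow> cd (f i) x) \<Longrightarrow> cd (\<lambda>x. \<Sum>i\<in>A. f i x) x"
proof (induction A rule: finite_induct)
  case empty then show ?case by (simp add: cd_const)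
next
  case (insert a A) then show ?case by (simp add: cd_add)
qed

lemma cholo_from_cd:
  assumes "\<And>j. cd (Q j) x" "\<And>j. cd (P j) x"
  shows "cholo_at (\<lambda>x. ((\<chi> j. Q j x), (\<chi> j. P j x))) x"
proof -
  obtain DQ where DQ: "\<And>j. (Q j has_derivative DQ j) (at x) \<and> (\<forall>c v. DQ j (c *s v) = c * DQ j v)"
    using assms(1) unfolding cd_def by metis
  obtain DP where DP: "\<And>j. (P j has_derivative DP j) (at x) \<and> (\<forall>c v. DP j (c *s v) = c * DP j v)"
    using assms(2) unfolding cd_def by metis
  show ?thesis unfolding cholo_at_def
    apply (rule exI[of _ "\<lambda>v. ((\<chi> j. DQ j v), (\<chi> j. DP j v))"])
    apply (intro conjI has_derivative_Pair has_derivative_vec_lambda)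
    using DQ DP by (auto simp: vec_eq_iff)
qed


definition Ecomb :: "'n::finite set \<Rightarrow> ('n \<Rightarrow> complex^'n) \<Rightarrow> complex^'n \<Rightarrow> complex^'n" where
  "Ecomb I e c = (\<Sum>i\<in>I. c$i *s e i)"

definition Phi :: "'n::finite set \<Rightarrow> ('n \<Rightarrow> complex^'n) \<Rightarrow> complex^'n \<Rightarrow> complex^'n" where
  "Phi I e c = (\<chi> j. if j \<in> I then - (\<Sum>l\<in>-I. c$l * e j $ l) else c$j)"

lemma Ecomb_nth:
  assumes ed: "\<forall>i i'. i' \<in> I \<longrightarrow> e i $ i' = (if i' = i then 1 else 0)" and "i' \<in> I"
  shows "Ecomb I e c $ i' = c $ i'"
proof -
  have "Ecomb I e c $ i' = (\<Sum>i\<in>I. c$i * e i $ i')"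
    unfolding Ecomb_def by (simp add: sum_component)
  also have "\<dots> = (\<Sum>i\<in>I. if i' = i then c$i else 0)"
    using ed assms(2) by (intro sum.cong) auto
  also have "\<dots> = c $ i'" using assms(2) by simp
  finally show ?thesis .
qed

lemma Ecomb_in:
  assumes "vec.subspace Y" "\<forall>i. e i \<in> Y"
  shows "Ecomb I e c \<in> Y"
  unfolding Ecomb_def using assms
  by (intro vec.subspace_sum) (auto intro: vec.subspace_scale)

lemma Ecomb_cong:
  assumes "\<forall>i\<in>I. c$i = d$i" shows "Ecomb I e c = Ecomb I e d"
  unfolding Ecomb_def using assms by (intro sum.cong) auto

lemma Ecomb_eq:
  assumes sub: "vec.subspace Y" and eY: "\<forall>i. e i \<in> Y"
    and ed: "\<forall>i i'. i' \<in> I \<longrightarrow> e i $ i' = (if i' = i then 1 else 0)"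
    and co: "coords_on_subspace I Y" and y: "y \<in> Y"
  shows "Ecomb I e y = y"
proof -
  have "y - Ecomb I e y \<in> Y" using sub y Ecomb_in[OF sub eY] by (intro vec.subspace_diff)
  moreover have "\<forall>i\<in>I. (y - Ecomb I e y) $ i = 0" using Ecomb_nth[OF ed] by simp
  ultimately have "y - Ecomb I e y = 0" using co unfolding coords_on_subspace_def by blast
  then show ?thesis by simp
qed

lemma sum_split_I: "(\<Sum>j\<in>UNIV. f j) = (\<Sum>j\<in>I. f j) + (\<Sum>j\<in>-I. (f j::complex))"
  for I :: "'n::finite set"
proof -
  have "(\<Sum>j\<in>I \<union> -I. f j) = (\<Sum>j\<in>I. f j) + (\<Sum>j\<in>-I. f j)"
    by (rule sum.union_disjoint) auto
  moreover have "I \<union> -I = UNIV" by auto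
  ultimately show ?thesis by simp
qed

lemma Phi_ann:
  assumes sub: "vec.subspace Y" and eY: "\<forall>i. e i \<in> Y"
    and ed: "\<forall>i i'. i' \<in> I \<longrightarrow> e i $ i' = (if i' = i then 1 else 0)"
    and co: "coords_on_subspace I Y"
  shows "Phi I e c \<in> annihilator Y"
  unfolding annihilator_def
proof safe
  fix y assume y: "y \<in> Y"
  have yj: "y $ j = (\<Sum>i\<in>I. y$i * e i $ j)" for j
    using Ecomb_eq[OF sub eY ed co y] unfolding Ecomb_def
    by (metis (no_types, lifting) sum.cong sum_component vector_smult_component)
  have "pairing (Phi I e c) y = (\<Sum>j\<in>I. Phi I e c $ j * y $ j) + (\<Sum>j\<in>-I. Phi I e c $ j * y $ j)"
    unfolding pairing_def by (rule sum_split_I)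
  also have "(\<Sum>j\<in>I. Phi I e c $ j * y $ j) = - (\<Sum>j\<in>I. \<Sum>l\<in>-I. y$j * c$l * e j $ l)"
    unfolding Phi_def by (simp add: sum_negf sum_distrib_left sum_distrib_right mult_ac)
  also have "(\<Sum>j\<in>-I. Phi I e c $ j * y $ j) = (\<Sum>l\<in>-I. \<Sum>j\<in>I. y$j * c$l * e j $ l)"
    unfolding Phi_def by (subst yj) (simp add: sum_distrib_left mult_ac)
  also have "\<dots> = (\<Sum>j\<in>I. \<Sum>l\<in>-I. y$j * c$l * e j $ l)" by (rule sum.swap)
  finally show "pairing (Phi I e c) y = 0" by simp
qed

lemma ann_Phi:
  assumes eY: "\<forall>i. e i \<in> Y"
    and ed: "\<forall>i i'. i' \<in> I \<longrightarrow> e i $ i' = (if i' = i then 1 else 0)"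
    and p: "p \<in> annihilator Y"
  shows "Phi I e p = p"
proof -
  have "p $ j = - (\<Sum>l\<in>-I. p$l * e j $ l)" if j: "j \<in> I" for j
  proof -
    have "0 = pairing p (e j)" using p eY unfolding annihilator_def by auto
    also have "\<dots> = (\<Sum>l\<in>I. p$l * e j $ l) + (\<Sum>l\<in>-I. p$l * e j $ l)"
      unfolding pairing_def by (rule sum_split_I)
    also have "(\<Sum>l\<in>I. p$l * e j $ l) = (\<Sum>l\<in>I. if l = j then p$l else 0)"
      using ed by (intro sum.cong) auto
    also have "\<dots> = p $ j" using j by simp
    finally show ?thesis by (simp add: eq_neg_iff_add_eq_0)
  qed
  then show ?thesis unfolding Phi_def by (auto simp: vec_eq_iff)
qed

lemma Phi_cong: "\<forall>l. l \<notin> I \<longrightarrow> c$l = d$l \<Longrightarrow> Phi I e c = Phi I e d"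
  unfolding Phi_def by (auto simp: vec_eq_iff)

lemma Phi_out: "j \<notin> I \<Longrightarrow> Phi I e c $ j = c $ j"
  unfolding Phi_def by simp

lemma cd_Phi: "cd (\<lambda>x. Phi I e x $ j) x"
  unfolding Phi_def by (cases "j \<in> I") (auto intro!: cd_minus cd_sum cd_mult cd_nth cd_const)


theorem lemma4p2:
  fixes Y :: "(complex^'n) set" and a :: "complex^'n" and I :: "'n set" and k :: nat
  assumes "vec.subspace Y"
    and "vec.dim Y = k"
    and "\<forall>j. a$j \<noteq> 0"
    and "\<forall>j. \<not> Y \<subseteq> {q. q$j = 0}"
    and "\<forall>j. \<not> annihilator Y \<subseteq> {p. p$j = 0}"
    and "card I = k"
    and "coords_on_subspace I Y"
  shows "coordinate_system_on (coord_map I) (L_set Y a)"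
proof -
  note sub = assms(1) and co = assms(7)
  have "\<forall>i. \<exists>y\<in>Y. \<forall>i'\<in>I. y $ i' = (if i' = i then 1 else 0)"
  proof
    fix i
    from co obtain y where "y \<in> Y" "\<forall>i'\<in>I. y$i' = (\<chi> j. if j = i then (1::complex) else 0) $ i'"
      unfolding coords_on_subspace_def by blast
    then show "\<exists>y\<in>Y. \<forall>i'\<in>I. y $ i' = (if i' = i then 1 else 0)" by (intro bexI[of _ y]) auto
  qed
  then obtain e where eY: "\<forall>i. e i \<in> Y" and ed: "\<forall>i i'. i' \<in> I \<longrightarrow> e i $ i' = (if i' = i then 1 else 0)"
    by metis
  define P where "P x = Phi I e x" for x
  define psi where "psi x = ((\<chi> j. (\<Sum>i\<in>I. (x$i - a$i / P x $ i) * e i $ j) + a$j / P x $ j), P x)" for x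
  define U where "U = {x. \<forall>j. P x $ j \<noteq> 0}"
  define L where "L = L_set Y a"
  define F where "F = coord_map I"
  have psi_alt: "psi x = ((\<chi> j. Ecomb I e (\<chi> i. x$i - a$i / P x $ i) $ j + a$j / P x $ j), P x)" for x
    unfolding psi_def Ecomb_def by (simp add: sum_component algebra_simps)
  have left: "psi (F z) = z \<and> F z \<in> U" if z: "z \<in> L" for z
  proof -
    obtain q p where q: "q \<in> Y" and p: "p \<in> annihilator Y" and pnz: "\<forall>j. p$j \<noteq> 0"
      and zdef: "z = r_map a (q, p)"
      using z unfolding L_def L_set_def by auto
    have Fz: "F z = (\<chi> j. if j \<in> I then q$j + a$j/p$j else p$j)"
      unfolding F_def coord_map_def zdef r_map_def by (simp add: vec_eq_iff)
    have PF: "P (F z) = p"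
      unfolding P_def using ann_Phi[OF eY ed p] Phi_cong[of I "F z" p e] Fz by simp
    have "Ecomb I e (\<chi> i. F z $ i - a$i / P (F z) $ i) = Ecomb I e q"
      by (rule Ecomb_cong) (simp add: PF, simp add: Fz)
    also have "\<dots> = q" by (rule Ecomb_eq[OF sub eY ed co q])
    finally have E: "Ecomb I e (\<chi> i. F z $ i - a$i / P (F z) $ i) = q" .
    have "psi (F z) = ((\<chi> j. q$j + a$j/p$j), p)" unfolding psi_alt using E unfolding PF by simp
    then have "psi (F z) = z" unfolding zdef r_map_def by simp
    moreover have "F z \<in> U" unfolding U_def using pnz PF by simp
    ultimately show ?thesis by simp
  qed
  have right: "psi x \<in> L \<and> F (psi x) = x" if x: "x \<in> U" for x
  proof -
    define q where "q = Ecomb I e (\<chi> i. x$i - a$i / P x $ i)"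
    have q: "q \<in> Y" unfolding q_def by (rule Ecomb_in[OF sub eY])
    have p: "P x \<in> annihilator Y" unfolding P_def by (rule Phi_ann[OF sub eY ed co])
    have pnz: "\<forall>j. P x $ j \<noteq> 0" using x unfolding U_def by simp
    have ps: "psi x = r_map a (q, P x)" unfolding psi_alt r_map_def q_def by simp
    have "psi x \<in> L" unfolding L_def L_set_def ps using q p pnz by auto
    moreover have "F (psi x) = x"
      unfolding F_def coord_map_def ps r_map_def
      using Ecomb_nth[OF ed] pnz Phi_out[of _ I e x] unfolding q_def P_def
      by (auto simp: vec_eq_iff)
    ultimately show ?thesis by simp
  qed
  have bij: "bij_betw F L U"
    unfolding bij_betw_def
  proof
    show "inj_on F L" by (rule inj_on_inverseI[of _ psi]) (use left in blast)
    show "F ` L = U"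
    proof
      show "F ` L \<subseteq> U" using left by blast
      show "U \<subseteq> F ` L" using right by (metis image_eqI subsetI)
    qed
  qed
  have cdP: "cd (\<lambda>x. P x $ j) x" for j x unfolding P_def by (rule cd_Phi)
  have cont: "continuous_on UNIV (\<lambda>x. P x $ j)" for j
  proof -
    have "isCont (\<lambda>x. P x $ j) x" for x
      using cdP[of j x] unfolding cd_def by (metis has_derivative_continuous)
    then show ?thesis by (simp add: continuous_at_imp_continuous_on)
  qed
  have "U = (\<Inter>j\<in>UNIV. {x. P x $ j \<noteq> 0})" unfolding U_def by auto
  moreover have "open {x. P x $ j \<noteq> 0}" for j
    by (rule open_Collect_neq[OF cont continuous_on_const])
  ultimately have openU: "open U" by auto
  have holo: "cholo_at psi x" if x: "x \<in> U" for x
  proof -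
    have pnz: "\<forall>j. P x $ j \<noteq> 0" using x unfolding U_def by simp
    have "cholo_at (\<lambda>x. ((\<chi> j. (\<Sum>i\<in>I. (x$i - a$i / P x $ i) * e i $ j) + a$j / P x $ j), (\<chi> j. P x $ j))) x"
      by (rule cholo_from_cd) (auto intro!: cd_add cd_sum cd_mult cd_diff cd_divide cd_nth cd_const cdP simp: pnz)
    moreover have "(\<lambda>x. ((\<chi> j. (\<Sum>i\<in>I. (x$i - a$i / P x $ i) * e i $ j) + a$j / P x $ j), (\<chi> j. P x $ j))) = psi"
      unfolding psi_def by (simp add: vec_lambda_eta)
    ultimately show ?thesis by simp
  qed
  show ?thesis unfolding coordinate_system_on_def
    using openU bij left holo unfolding F_def L_def by blast
qed

end
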